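(* Let $X,Y$ be Banach spaces, let $-A$ be the generator of a strongly continuous semigroup $(T(t))_{t\ge0}$ on $X$, and let $C:\mathcal D(A)\to Y$ be linear and bounded for the graph norm. Suppose that $(A,C)$ is an admissible and exactly observable BFC-system. Then the adjoint $T(t_0)^*$ is injective for some $t_0>0$ if and only if $T(t)^*$ is injective for all $t>0$, and this holds if and only if $(T(t))_{t\ge0}$ extends to a group on $X$ (i.e. there is a group $(S(t))_{t\in\mathbb R}$ of bounded operators on $X$ with $S(t)=T(t)$ for $t\ge0$).
   Context: For $\tau\in(0,\infty]$ set $M(\tau)^2:=\sup_{x\in\mathcal D(A),\|x\|=1}\int_0^\tau\|CT(t)x\|_Y^2\,dt$ and $m(\tau)^2:=\inf_{x\in\mathcal D(A),\|x\|=1}\int_0^\tau\|CT(t)x\|_Y^2\,dt$. $C$ is admissible in time $\tau$ if $M(\tau)<\infty$, and exactly observable in time $\eta$ if $m(\eta)>0$. $(A,C)$ is a BFC-system if there exist $0<\eta<\tau$ such that $C$ is admissible and exactly observable in time $\tau$ and $M(\eta)<m(\tau)$. *)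

theory Defs
  imports "HOL-Analysis.Analysis"
begin

text \<open>Strongly continuous (C0) semigroup of bounded operators; values for t < 0 are irrelevant.\<close>
definition c0_semigroup :: "(real \<Rightarrow> ('x::banach \<Rightarrow>\<^sub>L 'x)) \<Rightarrow> bool" where
  "c0_semigroup T \<longleftrightarrow>
     T 0 = id_blinfun \<and>
     (\<forall>s t. 0 \<le> s \<longrightarrow> 0 \<le> t \<longrightarrow> T (s + t) = T s o\<^sub>L T t) \<and>
     (\<forall>x. ((\<lambda>t. T t x) \<longlongrightarrow> x) (at_right 0))"

definition is_generator :: "(real \<Rightarrow> ('x::banach \<Rightarrow>\<^sub>L 'x)) \<Rightarrow> 'x set \<Rightarrow> ('x \<Rightarrow> 'x) \<Rightarrow> bool" where
  "is_generator T D G \<longleftrightarrow>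
     D = {x. \<exists>y. ((\<lambda>h. (1 / h) *\<^sub>R (T h x - x)) \<longlongrightarrow> y) (at_right 0)} \<and>
     (\<forall>x\<in>D. ((\<lambda>h. (1 / h) *\<^sub>R (T h x - x)) \<longlongrightarrow> G x) (at_right 0))"

definition obs_energy :: "(real \<Rightarrow> ('x::banach \<Rightarrow>\<^sub>L 'x)) \<Rightarrow> ('x \<Rightarrow> 'y::banach) \<Rightarrow> ereal \<Rightarrow> 'x \<Rightarrow> ennreal" where
  "obs_energy T C \<tau> x =
     (\<integral>\<^sup>+ t \<in> {t. 0 \<le> t \<and> ereal t < \<tau>}. ennreal ((norm (C (T t x)))\<^sup>2) \<partial>lborel)"

definition M_sq :: "(real \<Rightarrow> ('x::banach \<Rightarrow>\<^sub>L 'x)) \<Rightarrow> ('x \<Rightarrow> 'y::banach) \<Rightarrow> 'x set \<Rightarrow> ereal \<Rightarrow> ennreal" where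
  "M_sq T C D \<tau> = (SUP x \<in> {x \<in> D. norm x = 1}. obs_energy T C \<tau> x)"

definition m_sq :: "(real \<Rightarrow> ('x::banach \<Rightarrow>\<^sub>L 'x)) \<Rightarrow> ('x \<Rightarrow> 'y::banach) \<Rightarrow> 'x set \<Rightarrow> ereal \<Rightarrow> ennreal" where
  "m_sq T C D \<tau> = (INF x \<in> {x \<in> D. norm x = 1}. obs_energy T C \<tau> x)"

definition admissible_in :: "(real \<Rightarrow> ('x::banach \<Rightarrow>\<^sub>L 'x)) \<Rightarrow> ('x \<Rightarrow> 'y::banach) \<Rightarrow> 'x set \<Rightarrow> ereal \<Rightarrow> bool" where
  "admissible_in T C D \<tau> \<longleftrightarrow> M_sq T C D \<tau> < top"

definition exactly_observable_in :: "(real \<Rightarrow> ('x::banach \<Rightarrow>\<^sub>L 'x)) \<Rightarrow> ('x \<Rightarrow> 'y::banach) \<Rightarrow> 'x set \<Rightarrow> ereal \<Rightarrow> bool" where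
  "exactly_observable_in T C D \<tau> \<longleftrightarrow> m_sq T C D \<tau> > 0"

text \<open>BFC-system: exist 0 < eta < tau (tau in (0,infinity]) with C admissible and exactly
  observable in time tau and M(eta) < m(tau) (equivalently M(eta)^2 < m(tau)^2).\<close>
definition BFC_system :: "(real \<Rightarrow> ('x::banach \<Rightarrow>\<^sub>L 'x)) \<Rightarrow> ('x \<Rightarrow> 'y::banach) \<Rightarrow> 'x set \<Rightarrow> bool" where
  "BFC_system T C D \<longleftrightarrow>
     (\<exists>(\<eta>::real) (\<tau>::ereal). 0 < \<eta> \<and> ereal \<eta> < \<tau> \<and>
        admissible_in T C D \<tau> \<and> exactly_observable_in T C D \<tau> \<and>
        M_sq T C D (ereal \<eta>) < m_sq T C D \<tau>)"

definition adjoint_injective :: "('x::banach \<Rightarrow>\<^sub>L 'x) \<Rightarrow> bool" where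
  "adjoint_injective L \<longleftrightarrow> (\<forall>\<phi> :: 'x \<Rightarrow>\<^sub>L real. \<phi> o\<^sub>L L = 0 \<longrightarrow> \<phi> = 0)"

definition extends_to_group :: "(real \<Rightarrow> ('x::banach \<Rightarrow>\<^sub>L 'x)) \<Rightarrow> bool" where
  "extends_to_group T \<longleftrightarrow>
     (\<exists>S :: real \<Rightarrow> ('x \<Rightarrow>\<^sub>L 'x). S 0 = id_blinfun \<and>
        (\<forall>s t. S (s + t) = S s o\<^sub>L S t) \<and> (\<forall>t\<ge>0. S t = T t))"

end

theory Submission
  imports Defs
begin

lemma uniform_boundedness:
  fixes F :: "nat \<Rightarrow> ('a::banach \<Rightarrow>\<^sub>L 'b::real_normed_vector)"
  assumes bd: "\<And>x. \<exists>B. \<forall>n. norm (F n x) \<le> B"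
  shows "\<exists>B. \<forall>n. norm (F n) \<le> B"
proof -
  define E where "E k = (\<Inter>n. {x. norm (F n x) \<le> real k})" for k :: nat
  have clE: "closed (E k)" for k
    unfolding E_def
    by (intro closed_INT ballI closed_Collect_le continuous_intros linear_continuous_on
              bounded_linear.linear blinfun.bounded_linear_right)
  have UE: "\<Union>(range E) = UNIV"
  proof -
    have "x \<in> \<Union>(range E)" for x
    proof -
      obtain B where B: "\<forall>n. norm (F n x) \<le> B" using bd by blast
      obtain k :: nat where "B \<le> real k" using real_arch_simple by blast
      then have "x \<in> E k" using B unfolding E_def by (auto intro: order_trans)
      then show ?thesis by blast
    qed
    then show ?thesis by blast
  qed
  have "\<exists>k. interior (E k) \<noteq> {}"
  proof (rule ccontr)
    assume "\<not> ?thesis"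
    then have "euclidean interior_of \<Union>(range E) = {}"
      by (intro Baire_category_alt) (auto simp: completely_metrizable_space_euclidean clE
           simp flip: closed_closedin)
    then show False using UE by simp
  qed
  then obtain k x0 where x0: "x0 \<in> interior (E k)" by blast
  have "open (interior (E k))" by simp
  then obtain r where r0: "r > 0" "ball x0 r \<subseteq> interior (E k)"
    using x0 open_contains_ball by blast
  then have r: "r > 0" "ball x0 r \<subseteq> E k" using interior_subset by blast+
  have small: "norm (F n u) \<le> 2 * real k" if "norm u < r" for n u
  proof -
    have "x0 + u \<in> E k" "x0 \<in> E k" using r that by (auto simp: dist_norm)
    then have "norm (F n (x0 + u)) \<le> real k" "norm (F n x0) \<le> real k" unfolding E_def by auto
    moreover have "F n u = F n (x0 + u) - F n x0" by (simp add: blinfun.add_right)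
    ultimately show ?thesis using norm_triangle_ineq4[of "F n (x0 + u)" "F n x0"] by simp
  qed
  have "norm (F n) \<le> 4 * real k / r" for n
  proof (rule norm_blinfun_bound)
    show "0 \<le> 4 * real k / r" using r by simp
    fix u
    show "norm (F n u) \<le> 4 * real k / r * norm u"
    proof (cases "u = 0")
      case True then show ?thesis by simp
    next
      case False
      define c where "c = r / (2 * norm u)"
      have c: "c > 0" using r False c_def by simp
      have "norm (c *\<^sub>R u) < r" using r False c by (simp add: c_def)
      then have "norm (F n (c *\<^sub>R u)) \<le> 2 * real k" by (rule small)
      then have "c * norm (F n u) \<le> 2 * real k" using c by (simp add: blinfun.scaleR_right)
      then have "norm (F n u) \<le> 2 * real k / c" using c by (simp add: field_simps)
      also have "2 * real k / c = 4 * real k / r * norm u" using r False by (simp add: c_def field_simps)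
      finally show ?thesis .
    qed
  qed
  then show ?thesis by blast
qed

lemma sgD:
  assumes "c0_semigroup T"
  shows sg0: "T 0 = id_blinfun"
    and sgadd: "\<And>s t. 0 \<le> s \<Longrightarrow> 0 \<le> t \<Longrightarrow> T (s + t) = T s o\<^sub>L T t"
    and sgcont: "\<And>x. ((\<lambda>t. T t x) \<longlongrightarrow> x) (at_right 0)"
  using assms unfolding c0_semigroup_def by auto

lemma sg_bound_near0:
  fixes T :: "real \<Rightarrow> ('x::banach \<Rightarrow>\<^sub>L 'x)"
  assumes sg: "c0_semigroup T"
  shows "\<exists>\<delta>>0. \<exists>K. \<forall>t. 0 \<le> t \<and> t \<le> \<delta> \<longrightarrow> norm (T t) \<le> K"
proof (rule ccontr)
  assume "\<not> ?thesis"
  then have H: "\<forall>\<delta>>0. \<forall>K. \<exists>t. 0 \<le> t \<and> t \<le> \<delta> \<and> norm (T t) > K" by (auto simp: not_le)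
  have "\<forall>n::nat. \<exists>t. 0 \<le> t \<and> t \<le> 1 / (real n + 1) \<and> norm (T t) > real n + 1"
  proof
    fix n :: nat
    have "1 / (real n + 1) > 0" by simp
    then show "\<exists>t. 0 \<le> t \<and> t \<le> 1 / (real n + 1) \<and> norm (T t) > real n + 1" using H by blast
  qed
  then obtain s where s: "\<And>n. 0 \<le> s n" "\<And>n. s n \<le> 1 / (real n + 1)" "\<And>n. norm (T (s n)) > real n + 1"
    by metis
  have spos: "s n > 0" for n
  proof -
    have "s n \<noteq> 0"
    proof
      assume "s n = 0"
      then have "norm (T (s n)) \<le> 1" using sg0[OF sg] norm_blinfun_id_le by simp
      then show False using s(3)[of n] by simp
    qed
    then show ?thesis using s(1)[of n] by simp
  qed
  have s0: "s \<longlonglongrightarrow> 0"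
  proof (rule tendsto_sandwich[of "\<lambda>_. 0" _ _ "\<lambda>n. 1 / (real n + 1)"])
    show "\<forall>\<^sub>F n in sequentially. 0 \<le> s n" using s(1) by simp
    show "\<forall>\<^sub>F n in sequentially. s n \<le> 1 / (real n + 1)" using s(2) by simp
    show "(\<lambda>n. 1 / (real n + 1)) \<longlonglongrightarrow> 0" proof -
      have "(\<lambda>n. 1 / (real n + 1)) = (\<lambda>n. inverse (real (Suc n)))"
        by (simp add: inverse_eq_divide add.commute)
      then show ?thesis using LIMSEQ_inverse_real_of_nat by simp
    qed
  qed simp
  have sr: "filterlim s (at_right 0) sequentially"
  proof -
    have "\<forall>n. s n \<in> {0<..} \<and> s n \<noteq> 0" using spos by (metis greaterThan_iff less_irrefl)
    then show ?thesis unfolding filterlim_at using s0 by (simp add: always_eventually)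
  qed
  have conv: "(\<lambda>n. T (s n) x) \<longlonglongrightarrow> x" for x
    using filterlim_compose[OF sgcont[OF sg, of x] sr] by simp
  have "\<exists>B. \<forall>n. norm (T (s n) x) \<le> B" for x
  proof -
    have "bounded (range (\<lambda>n. T (s n) x))" using conv[of x] by (rule convergent_imp_bounded)
    then show ?thesis unfolding bounded_iff by auto
  qed
  from uniform_boundedness[of "\<lambda>n. T (s n)", OF this] obtain B where B: "\<And>n. norm (T (s n)) \<le> B" by blast
  obtain n :: nat where "B \<le> real n" using real_arch_simple by blast
  then show False using B[of n] s(3)[of n] by simp
qed

lemma sg_bound:
  fixes T :: "real \<Rightarrow> ('x::banach \<Rightarrow>\<^sub>L 'x)"
  assumes sg: "c0_semigroup T"
  shows "\<exists>K\<ge>0. \<forall>t. 0 \<le> t \<and> t \<le> b \<longrightarrow> norm (T t) \<le> K"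
proof -
  obtain \<delta> K0 where d: "\<delta> > 0" and K0: "\<And>t. 0 \<le> t \<Longrightarrow> t \<le> \<delta> \<Longrightarrow> norm (T t) \<le> K0"
    using sg_bound_near0[OF sg] by blast
  define K where "K = max K0 0"
  have K: "K \<ge> 0" "\<And>t. 0 \<le> t \<Longrightarrow> t \<le> \<delta> \<Longrightarrow> norm (T t) \<le> K"
    using K0 unfolding K_def by (auto intro: max.coboundedI1)
  have ind: "\<exists>B\<ge>0. \<forall>t. 0 \<le> t \<and> t \<le> real n * \<delta> \<longrightarrow> norm (T t) \<le> B" for n
  proof (induction n)
    case 0
    show ?case by (rule exI[of _ 1]) (use sg0[OF sg] norm_blinfun_id_le in auto)
  next
    case (Suc n)
    then obtain B where B: "B \<ge> 0" "\<And>t. 0 \<le> t \<Longrightarrow> t \<le> real n * \<delta> \<Longrightarrow> norm (T t) \<le> B" by blast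
    show ?case
    proof (rule exI[of _ "max K (K * B)"], intro conjI allI impI)
      show "0 \<le> max K (K * B)" using K by simp
      fix t assume t: "0 \<le> t \<and> t \<le> real (Suc n) * \<delta>"
      show "norm (T t) \<le> max K (K * B)"
      proof (cases "t \<le> \<delta>")
        case True then show ?thesis using K t by (auto intro: max.coboundedI1)
      next
        case False
        have "T t = T \<delta> o\<^sub>L T (t - \<delta>)" using sgadd[OF sg, of \<delta> "t - \<delta>"] d False by simp
        then have "norm (T t) \<le> norm (T \<delta>) * norm (T (t - \<delta>))" by (simp add: norm_blinfun_compose)
        also have "\<dots> \<le> K * B"
          using K B t False d by (intro mult_mono) (auto simp: algebra_simps)
        finally show ?thesis by (auto intro: max.coboundedI2)
      qed
    qed
  qed
  obtain n :: nat where "b / \<delta> \<le> real n" using real_arch_simple by blast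
  then have "b \<le> real n * \<delta>" using d by (simp add: field_simps)
  then show ?thesis using ind[of n] by force
qed

lemma sg_continuous:
  fixes T :: "real \<Rightarrow> ('x::banach \<Rightarrow>\<^sub>L 'x)"
  assumes sg: "c0_semigroup T"
  shows "continuous_on {0..} (\<lambda>t. T t x)"
  unfolding continuous_on_iff
proof (intro ballI allI impI)
  fix t e :: real assume t: "t \<in> {0..}" and e: "e > 0"
  obtain K where K: "K \<ge> 0" "\<And>s. 0 \<le> s \<Longrightarrow> s \<le> t + 1 \<Longrightarrow> norm (T s) \<le> K"
    using sg_bound[OF sg, of "t + 1"] by blast
  have "\<forall>\<^sub>F h in at_right 0. dist (T h x) x < e / (K + 1)"
    using sgcont[OF sg, of x] e K(1) by (auto simp: tendsto_iff)
  then obtain d0 where d0: "d0 > 0" "\<And>h. 0 < h \<Longrightarrow> h < d0 \<Longrightarrow> dist (T h x) x < e / (K + 1)"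
    unfolding eventually_at_right_field by (auto simp: add.commute)
  define d where "d = min d0 1"
  have key: "norm (T b x - T a x) < e" if ab: "0 \<le> a" "a \<le> b" "b \<le> t + 1" "b - a < d0" for a b
  proof (cases "a = b")
    case True then show ?thesis using e by simp
  next
    case False
    have "T b = T a o\<^sub>L T (b - a)" using sgadd[OF sg, of a "b - a"] ab by simp
    then have "T b x - T a x = T a (T (b - a) x - x)" by (simp add: blinfun.diff_right)
    then have "norm (T b x - T a x) \<le> norm (T a) * norm (T (b - a) x - x)"
      by (simp add: norm_blinfun)
    also have "\<dots> \<le> K * (e / (K + 1))"
      using K ab d0(2)[of "b - a"] False by (intro mult_mono) (auto simp: dist_norm)
    also have "\<dots> < e" using K e by (simp add: field_simps)
    finally show ?thesis .
  qed
  show "\<exists>d>0. \<forall>t'\<in>{0..}. dist t' t < d \<longrightarrow> dist (T t' x) (T t x) < e"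
  proof (rule exI[of _ d], intro conjI ballI impI)
    show "d > 0" using d0 d_def by simp
    fix t' :: real assume t': "t' \<in> {0..}" "dist t' t < d"
    show "dist (T t' x) (T t x) < e"
    proof (cases "t \<le> t'")
      case True then show ?thesis using key[of t t'] t t' d_def by (auto simp: dist_norm)
    next
      case False then show ?thesis using key[of t' t] t t' d_def by (auto simp: dist_norm norm_minus_commute)
    qed
  qed
qed

lemma avg_lim:
  fixes f :: "real \<Rightarrow> 'a::banach"
  assumes cf: "continuous_on {0..} f" and h: "0 \<le> h"
  shows "((\<lambda>r. (1/r) *\<^sub>R integral {h..h+r} f) \<longlongrightarrow> f h) (at_right 0)"
  unfolding tendsto_iff
proof (intro allI impI)
  fix e :: real assume e: "e > 0"
  obtain d where d: "d > 0" "\<And>s. s \<in> {0..} \<Longrightarrow> dist s h < d \<Longrightarrow> dist (f s) (f h) < e/2"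
    using cf h e unfolding continuous_on_iff by (metis atLeast_iff half_gt_zero)
  show "\<forall>\<^sub>F r in at_right 0. dist ((1/r) *\<^sub>R integral {h..h+r} f) (f h) < e"
    unfolding eventually_at_right_field
  proof (rule exI[of _ d], intro conjI allI impI)
    show "0 < d" by fact
    fix r :: real assume r: "0 < r" "r < d"
    have cfr: "continuous_on {h..h+r} f" using continuous_on_subset[OF cf] h r by auto
    have int: "f integrable_on {h..h+r}" by (rule integrable_continuous_interval[OF cfr])
    have eq: "integral {h..h+r} f - r *\<^sub>R f h = integral {h..h+r} (\<lambda>s. f s - f h)"
    proof -
      have "integral {h..h+r} (\<lambda>s. f s - f h) = integral {h..h+r} f - integral {h..h+r} (\<lambda>s. f h)"
        by (rule integral_diff[OF int]) (rule integrable_const_ivl)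
      then show ?thesis using r by simp
    qed
    have "norm (integral {h..h+r} (\<lambda>s. f s - f h)) \<le> (e/2) * ((h + r) - h)"
    proof (rule integral_bound)
      show "h \<le> h + r" using r by simp
      show "continuous_on {h..h + r} (\<lambda>s. f s - f h)" by (intro continuous_intros cfr)
      fix t assume "t \<in> {h..h+r}"
      then show "norm (f t - f h) \<le> e/2" using d(2)[of t] h r by (auto simp: dist_norm dist_real_def)
    qed
    then have "norm (integral {h..h+r} f - r *\<^sub>R f h) \<le> (e/2) * r" using eq by simp
    then have "norm (integral {h..h+r} f - r *\<^sub>R f h) / r \<le> e/2"
      using r by (simp add: pos_divide_le_eq)
    then have "norm ((1/r) *\<^sub>R (integral {h..h+r} f - r *\<^sub>R f h)) \<le> e/2"
      using r by simp
    moreover have "(1/r) *\<^sub>R (integral {h..h+r} f - r *\<^sub>R f h) = (1/r) *\<^sub>R integral {h..h+r} f - f h"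
      using r by (simp add: scaleR_diff_right)
    ultimately show "dist ((1/r) *\<^sub>R integral {h..h+r} f) (f h) < e" using e by (simp add: dist_norm)
  qed
qed

lemma genD:
  assumes "is_generator T D G"
  shows gen_mem: "\<And>x y. ((\<lambda>h. (1 / h) *\<^sub>R (T h x - x)) \<longlongrightarrow> y) (at_right 0) \<Longrightarrow> x \<in> D"
    and gen_lim: "\<And>x. x \<in> D \<Longrightarrow> ((\<lambda>h. (1 / h) *\<^sub>R (T h x - x)) \<longlongrightarrow> G x) (at_right 0)"
  using assms unfolding is_generator_def by auto

lemma gen_eq:
  assumes gen: "is_generator T D G" and "x \<in> D"
    and "((\<lambda>h. (1 / h) *\<^sub>R (T h x - x)) \<longlongrightarrow> y) (at_right (0::real))"
  shows "G x = y"
  using tendsto_unique[OF _ gen_lim[OF gen assms(2)] assms(3)] by simp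

lemma gen_add:
  assumes gen: "is_generator T D G" and x: "x \<in> D" and y: "y \<in> D"
  shows "x + y \<in> D" "G (x + y) = G x + G y"
proof -
  have "((\<lambda>h. (1 / h) *\<^sub>R (T h (x + y) - (x + y))) \<longlongrightarrow> G x + G y) (at_right 0)"
    using tendsto_add[OF gen_lim[OF gen x] gen_lim[OF gen y]]
    by (simp add: blinfun.add_right algebra_simps scaleR_add_right)
  then show "x + y \<in> D" "G (x + y) = G x + G y" using gen_mem[OF gen] gen_eq[OF gen] by blast+
qed

lemma gen_scale:
  assumes gen: "is_generator T D G" and x: "x \<in> D"
  shows "c *\<^sub>R x \<in> D" "G (c *\<^sub>R x) = c *\<^sub>R G x"
proof -
  have "((\<lambda>h. (1 / h) *\<^sub>R (T h (c *\<^sub>R x) - c *\<^sub>R x)) \<longlongrightarrow> c *\<^sub>R G x) (at_right 0)"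
    using tendsto_scaleR[OF tendsto_const[of c] gen_lim[OF gen x]]
    by (simp add: blinfun.scaleR_right scaleR_diff_right)
  then show "c *\<^sub>R x \<in> D" "G (c *\<^sub>R x) = c *\<^sub>R G x" using gen_mem[OF gen] gen_eq[OF gen] by blast+
qed

lemma gen_T:
  assumes sg: "c0_semigroup T" and gen: "is_generator T D G" and x: "x \<in> D" and t: "0 \<le> t"
  shows "T t x \<in> D" "G (T t x) = T t (G x)"
proof -
  have "((\<lambda>h. T t ((1 / h) *\<^sub>R (T h x - x))) \<longlongrightarrow> T t (G x)) (at_right 0)"
    by (rule blinfun.tendsto[OF tendsto_const gen_lim[OF gen x]])
  moreover have "\<forall>\<^sub>F h in at_right 0. T t ((1 / h) *\<^sub>R (T h x - x)) = (1 / h) *\<^sub>R (T h (T t x) - T t x)"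
  proof -
    have "T t ((1 / h) *\<^sub>R (T h x - x)) = (1 / h) *\<^sub>R (T h (T t x) - T t x)" if "h > 0" for h :: real
    proof -
      have "T t (T h x) = T (t + h) x" using sgadd[OF sg, of t h] t that by simp
      also have "\<dots> = T h (T t x)" using sgadd[OF sg, of h t] t that by (simp add: add.commute)
      finally show ?thesis by (simp add: blinfun.scaleR_right blinfun.diff_right)
    qed
    then show ?thesis by (simp add: eventually_at_right_field) (metis zero_less_one)
  qed
  ultimately have "((\<lambda>h. (1 / h) *\<^sub>R (T h (T t x) - T t x)) \<longlongrightarrow> T t (G x)) (at_right 0)"
    by (rule Lim_transform_eventually)
  then show "T t x \<in> D" "G (T t x) = T t (G x)" using gen_mem[OF gen] gen_eq[OF gen] by blast+
qed

lemma gen_dense: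
  fixes T :: "real \<Rightarrow> ('x::banach \<Rightarrow>\<^sub>L 'x)"
  assumes sg: "c0_semigroup T" and gen: "is_generator T D G"
  shows "x \<in> closure D"
proof -
  define f where "f s = T s x" for s
  have cf: "continuous_on {0..} f" unfolding f_def by (rule sg_continuous[OF sg])
  have cfi: "continuous_on {a..b} f" if "0 \<le> a" for a b using continuous_on_subset[OF cf] that by auto
  have inti: "f integrable_on {a..b}" if "0 \<le> a" for a b by (rule integrable_continuous_interval[OF cfi[OF that]])
  have ID: "integral {0..h} f \<in> D" if h: "h > 0" for h
  proof -
    have shift: "T r (integral {0..h} f) = integral {r..h+r} f" if r: "r \<ge> 0" for r
    proof -
      have "T r (integral {0..h} f) = integral {0..h} (blinfun_apply (T r) \<circ> f)"
        by (rule integral_linear[OF inti, symmetric]) (auto intro: blinfun.bounded_linear_right)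
      also have "\<dots> = integral {0..h} (f \<circ> (+) r)"
        by (rule integral_cong) (use r in \<open>simp add: f_def sgadd[OF sg]\<close>)
      also have "\<dots> = integral {0+r..h+r} f" by (rule integral_shift_Icc_real)
      finally show ?thesis by simp
    qed
    have ev: "\<forall>\<^sub>F r in at_right 0. (1 / r) *\<^sub>R (T r (integral {0..h} f) - integral {0..h} f)
               = (1/r) *\<^sub>R integral {h..h+r} f - (1/r) *\<^sub>R integral {0..0+r} f"
      unfolding eventually_at_right_field
    proof (rule exI[of _ h], intro conjI allI impI)
      show "0 < h" by fact
      fix r :: real assume r: "0 < r" "r < h"
      have c1: "integral {0..r} f + integral {r..h} f = integral {0..h} f"
        using Henstock_Kurzweil_Integration.integral_combine[where a=0 and c=r and b=h and f=f] r inti[of 0 h, simplified] by simp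
      have c2: "integral {r..h} f + integral {h..h+r} f = integral {r..h+r} f"
        using Henstock_Kurzweil_Integration.integral_combine[where a=r and c=h and b="h+r" and f=f] r inti[of r "h+r"] by simp
      have "T r (integral {0..h} f) - integral {0..h} f = integral {h..h+r} f - integral {0..r} f"
        using shift[of r] r by (simp flip: c1 c2 add: algebra_simps)
      then show "(1 / r) *\<^sub>R (T r (integral {0..h} f) - integral {0..h} f)
               = (1/r) *\<^sub>R integral {h..h+r} f - (1/r) *\<^sub>R integral {0..0+r} f"
        by (simp add: scaleR_diff_right)
    qed
    have "((\<lambda>r. (1/r) *\<^sub>R integral {h..h+r} f - (1/r) *\<^sub>R integral {0..0+r} f) \<longlongrightarrow> f h - f 0) (at_right 0)"
      by (intro tendsto_diff avg_lim cf) (use h in auto)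
    then have "((\<lambda>r. (1 / r) *\<^sub>R (T r (integral {0..h} f) - integral {0..h} f)) \<longlongrightarrow> f h - f 0) (at_right 0)"
      by (rule Lim_transform_eventually) (rule eventually_mono[OF ev], rule sym)
    then show ?thesis by (rule gen_mem[OF gen])
  qed
  have lim: "((\<lambda>h. (1/h) *\<^sub>R integral {0..0+h} f) \<longlongrightarrow> f 0) (at_right 0)"
    by (rule avg_lim[OF cf]) simp
  have "f 0 = x" unfolding f_def using sg0[OF sg] by simp
  moreover have "f 0 \<in> closure D"
  proof (rule Lim_in_closed_set[OF closed_closure _ _ lim])
    show "\<forall>\<^sub>F h in at_right 0. (1/h) *\<^sub>R integral {0..0+h} f \<in> closure D"
      unfolding eventually_at_right_field
      by (rule exI[of _ 1]) (auto intro!: closure_subset[THEN subsetD] gen_scale(1)[OF gen] ID)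
  qed (simp add: trivial_limit_at_right_real)
  ultimately show ?thesis by simp
qed

context
  fixes T :: "real \<Rightarrow> ('x::banach \<Rightarrow>\<^sub>L 'x)"
    and A :: "'x \<Rightarrow> 'x" and D :: "'x set"
    and C :: "'x \<Rightarrow> 'y::banach"
  assumes sg: "c0_semigroup T"
    and gen: "is_generator T D (\<lambda>x. - A x)"
    and C_add: "\<And>x y. x \<in> D \<Longrightarrow> y \<in> D \<Longrightarrow> C (x + y) = C x + C y"
    and C_scale: "\<And>c x. x \<in> D \<Longrightarrow> C (c *\<^sub>R x) = c *\<^sub>R C x"
    and C_bdd: "\<exists>K. \<forall>x\<in>D. norm (C x) \<le> K * (norm x + norm (A x))"
begin

lemma D_add: "x \<in> D \<Longrightarrow> y \<in> D \<Longrightarrow> x + y \<in> D" using gen_add[OF gen] by blast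
lemma D_scale: "x \<in> D \<Longrightarrow> c *\<^sub>R x \<in> D" using gen_scale[OF gen] by blast
lemma D_T: "x \<in> D \<Longrightarrow> 0 \<le> t \<Longrightarrow> T t x \<in> D" using gen_T[OF sg gen] by blast
lemma A_add: "x \<in> D \<Longrightarrow> y \<in> D \<Longrightarrow> A (x + y) = A x + A y"
  using gen_add(2)[OF gen] by (metis add_uminus_conv_diff minus_add_distrib minus_equation_iff)
lemma A_scale: "x \<in> D \<Longrightarrow> A (c *\<^sub>R x) = c *\<^sub>R A x" using gen_scale(2)[OF gen, of x c] by simp
lemma A_T: "x \<in> D \<Longrightarrow> 0 \<le> t \<Longrightarrow> A (T t x) = T t (A x)"
  using gen_T(2)[OF sg gen] by (simp add: blinfun.minus_right)
lemma D_zero: "0 \<in> D"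
proof -
  have "((\<lambda>h. (1 / h) *\<^sub>R (T h 0 - 0)) \<longlongrightarrow> 0) (at_right (0::real))" by simp
  then show ?thesis by (rule gen_mem[OF gen])
qed
lemma C_zero: "C 0 = 0" using C_scale[OF D_zero, of 0] by simp
lemma D_diff: "x \<in> D \<Longrightarrow> y \<in> D \<Longrightarrow> x - y \<in> D"
  using D_add[of x "(-1) *\<^sub>R y"] D_scale[of y "-1"] by simp
lemma C_diff: "x \<in> D \<Longrightarrow> y \<in> D \<Longrightarrow> C x - C y = C (x - y)"
  using C_add[of "x - y" y] D_diff by simp
lemma A_diff: "x \<in> D \<Longrightarrow> y \<in> D \<Longrightarrow> A (x - y) = A x - A y"
  using A_add[of "x - y" y] D_diff by simp

lemma C_cont: assumes x: "x \<in> D" shows "continuous_on {0..} (\<lambda>t. C (T t x))"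
proof -
  obtain K0 where K0: "\<forall>x\<in>D. norm (C x) \<le> K0 * (norm x + norm (A x))" using C_bdd by blast
  define K where "K = max K0 0"
  have K: "K \<ge> 0" "\<And>x. x \<in> D \<Longrightarrow> norm (C x) \<le> K * (norm x + norm (A x))"
  proof -
    show "K \<ge> 0" by (simp add: K_def)
    fix z assume "z \<in> D"
    then have "norm (C z) \<le> K0 * (norm z + norm (A z))" using K0 by blast
    also have "\<dots> \<le> K * (norm z + norm (A z))" by (intro mult_right_mono) (auto simp: K_def)
    finally show "norm (C z) \<le> K * (norm z + norm (A z))" .
  qed
  have Ax: "A x \<in> D \<or> True" by simp
  have bnd: "norm (C (T s x) - C (T t x)) \<le> K * (norm (T s x - T t x) + norm (T s (A x) - T t (A x)))"
    if st: "0 \<le> s" "0 \<le> t" for s t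
  proof -
    have d: "T s x \<in> D" "T t x \<in> D" using D_T x st by auto
    have "C (T s x) - C (T t x) = C (T s x - T t x)" by (rule C_diff[OF d])
    also have "norm \<dots> \<le> K * (norm (T s x - T t x) + norm (A (T s x - T t x)))"
      by (rule K(2)) (use d D_diff in auto)
    also have "A (T s x - T t x) = T s (A x) - T t (A x)"
      using d A_diff A_T x st by simp
    finally show ?thesis by simp
  qed
  have c1: "continuous_on {0..} (\<lambda>t. T t x)" and c2: "continuous_on {0..} (\<lambda>t. T t (A x))"
    using sg_continuous[OF sg] by auto
  show ?thesis unfolding continuous_on_def
  proof (intro ballI)
    fix t :: real assume t: "t \<in> {0..}"
    have l1: "((\<lambda>s. T s x) \<longlongrightarrow> T t x) (at t within {0..})" using c1 t by (simp add: continuous_on_def)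
    have l2: "((\<lambda>s. T s (A x)) \<longlongrightarrow> T t (A x)) (at t within {0..})" using c2 t by (simp add: continuous_on_def)
    have "((\<lambda>s. K * (norm (T s x - T t x) + norm (T s (A x) - T t (A x)))) \<longlongrightarrow> K * (0 + 0)) (at t within {0..})"
      by (intro tendsto_intros tendsto_norm_zero) (use l1 l2 in \<open>auto simp: LIM_zero_iff Lim_null[symmetric]\<close>)
    then have z: "((\<lambda>s. K * (norm (T s x - T t x) + norm (T s (A x) - T t (A x)))) \<longlongrightarrow> 0) (at t within {0..})" by simp
    have "((\<lambda>s. C (T s x) - C (T t x)) \<longlongrightarrow> 0) (at t within {0..})"
    proof (rule Lim_null_comparison[OF _ z])
      show "\<forall>\<^sub>F s in at t within {0..}. norm (C (T s x) - C (T t x)) \<le> K * (norm (T s x - T t x) + norm (T s (A x) - T t (A x)))"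
        using bnd t by (auto simp: eventually_at_filter)
    qed
    then show "((\<lambda>s. C (T s x)) \<longlongrightarrow> C (T t x)) (at t within {0..})" by (simp add: Lim_null[symmetric])
  qed
qed

lemma obs_eq:
  "obs_energy T C \<tau> x = (\<integral>\<^sup>+ t. ennreal ((norm (C (T (max t 0) x)))\<^sup>2) * indicator {t. 0 \<le> t \<and> ereal t < \<tau>} t \<partial>lborel)"
  unfolding obs_energy_def by (rule nn_integral_cong) (auto simp: indicator_def)

lemma g_meas: assumes x: "x \<in> D"
  shows "(\<lambda>t. ennreal ((norm (C (T (max t 0) x)))\<^sup>2)) \<in> borel_measurable borel"
proof -
  have "continuous_on UNIV (\<lambda>t. C (T (max t 0) x))"
    by (rule continuous_on_compose2[OF C_cont[OF x]]) (auto intro!: continuous_intros)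
  then have [measurable]: "(\<lambda>t. C (T (max t 0) x)) \<in> borel_measurable borel"
    by (rule borel_measurable_continuous_onI)
  show ?thesis by measurable
qed

lemma ereal_shift_less: "ereal (\<eta> + s) < \<tau> \<longleftrightarrow> ereal s < \<tau> - ereal \<eta>"
  by (cases \<tau>) auto

lemma obs_split:
  assumes x: "x \<in> D" and eta: "0 < \<eta>" "ereal \<eta> < \<tau>"
  shows "obs_energy T C \<tau> x = obs_energy T C (ereal \<eta>) x + obs_energy T C (\<tau> - ereal \<eta>) (T \<eta> x)"
proof -
  define g where "g t = ennreal ((norm (C (T (max t 0) x)))\<^sup>2)" for t
  have gm[measurable]: "g \<in> borel_measurable borel" unfolding g_def by (rule g_meas[OF x])
  define S1 where "S1 = {t. 0 \<le> t \<and> ereal t < ereal \<eta>}"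
  define S2 where "S2 = {t. \<eta> \<le> t \<and> ereal t < \<tau>}"
  have ind: "indicator {t. 0 \<le> t \<and> ereal t < \<tau>} t = (indicator S1 t + indicator S2 t :: ennreal)" for t
    using eta by (cases "0 \<le> t"; cases "t < \<eta>") (auto simp: S1_def S2_def indicator_def less_le_trans[of "ereal t" "ereal \<eta>" \<tau>] )
  have [measurable]: "S1 \<in> sets borel" "S2 \<in> sets borel" unfolding S1_def S2_def by measurable
  have "obs_energy T C \<tau> x = (\<integral>\<^sup>+ t. g t * indicator S1 t + g t * indicator S2 t \<partial>lborel)"
    unfolding obs_eq g_def[symmetric] ind by (simp add: distrib_left)
  also have "\<dots> = (\<integral>\<^sup>+ t. g t * indicator S1 t \<partial>lborel) + (\<integral>\<^sup>+ t. g t * indicator S2 t \<partial>lborel)"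
    by (rule nn_integral_add) measurable
  also have "(\<integral>\<^sup>+ t. g t * indicator S1 t \<partial>lborel) = obs_energy T C (ereal \<eta>) x"
    unfolding obs_eq g_def S1_def ..
  also have "(\<integral>\<^sup>+ t. g t * indicator S2 t \<partial>lborel) = obs_energy T C (\<tau> - ereal \<eta>) (T \<eta> x)"
  proof -
    have "(\<integral>\<^sup>+ t. g t * indicator S2 t \<partial>lborel) = (\<integral>\<^sup>+ s. g (\<eta> + s) * indicator S2 (\<eta> + s) \<partial>lborel)"
      using nn_integral_real_affine[where f="\<lambda>t. g t * indicator S2 t" and c=1 and t=\<eta>] by simp
    also have "\<dots> = (\<integral>\<^sup>+ s. ennreal ((norm (C (T (max s 0) (T \<eta> x))))\<^sup>2) * indicator {t. 0 \<le> t \<and> ereal t < \<tau> - ereal \<eta>} s \<partial>lborel)"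
    proof -
      have "g (\<eta> + s) * indicator S2 (\<eta> + s) = ennreal ((norm (C (T (max s 0) (T \<eta> x))))\<^sup>2) * indicator {t. 0 \<le> t \<and> ereal t < \<tau> - ereal \<eta>} s" for s
      proof (cases "0 \<le> s")
        case True
        have "T (\<eta> + s) = T s o\<^sub>L T \<eta>" using sgadd[OF sg, of s \<eta>] True eta by (simp add: add.commute)
        then show ?thesis using True eta unfolding g_def S2_def
          by (simp add: indicator_def ereal_shift_less)
      next
        case False then show ?thesis unfolding S2_def by (simp add: indicator_def)
      qed
      then show ?thesis by simp
    qed
    finally show ?thesis unfolding obs_eq .
  qed
  finally show ?thesis .
qed

lemma obs_homog:
  assumes x: "x \<in> D"
  shows "obs_energy T C \<tau> (c *\<^sub>R x) = ennreal (c\<^sup>2) * obs_energy T C \<tau> x"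
proof -
  define g where "g t = ennreal ((norm (C (T (max t 0) x)))\<^sup>2)" for t
  have gm[measurable]: "g \<in> borel_measurable borel" unfolding g_def by (rule g_meas[OF x])
  have "ennreal ((norm (C (T (max t 0) (c *\<^sub>R x))))\<^sup>2) = ennreal (c\<^sup>2) * g t" for t
  proof -
    have "C (T (max t 0) (c *\<^sub>R x)) = c *\<^sub>R C (T (max t 0) x)"
      using C_scale D_T[OF x] by (simp add: blinfun.scaleR_right)
    then show ?thesis unfolding g_def by (simp add: power_mult_distrib ennreal_mult)
  qed
  then have "obs_energy T C \<tau> (c *\<^sub>R x) = (\<integral>\<^sup>+ t. ennreal (c\<^sup>2) * (g t * indicator {t. 0 \<le> t \<and> ereal t < \<tau>} t) \<partial>lborel)"
    unfolding obs_eq by (simp add: mult.assoc)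
  also have "\<dots> = ennreal (c\<^sup>2) * (\<integral>\<^sup>+ t. g t * indicator {t. 0 \<le> t \<and> ereal t < \<tau>} t \<partial>lborel)"
    by (rule nn_integral_cmult) measurable
  finally show ?thesis unfolding obs_eq g_def .
qed

lemma obs_zero: "obs_energy T C \<tau> 0 = 0"
  unfolding obs_energy_def by (simp add: C_zero)

lemma obs_le_M:
  assumes x: "x \<in> D"
  shows "obs_energy T C \<tau> x \<le> M_sq T C D \<tau> * ennreal ((norm x)\<^sup>2)"
proof (cases "x = 0")
  case True then show ?thesis by (simp add: obs_zero)
next
  case False
  define u where "u = (1 / norm x) *\<^sub>R x"
  have u: "u \<in> D" "norm u = 1" using False D_scale[OF x] by (auto simp: u_def)
  have xu: "x = norm x *\<^sub>R u" using False by (simp add: u_def)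
  have "obs_energy T C \<tau> u \<le> M_sq T C D \<tau>" unfolding M_sq_def by (rule SUP_upper) (use u in auto)
  then have "ennreal ((norm x)\<^sup>2) * obs_energy T C \<tau> u \<le> ennreal ((norm x)\<^sup>2) * M_sq T C D \<tau>"
    by (rule mult_left_mono) simp
  moreover have "obs_energy T C \<tau> x = ennreal ((norm x)\<^sup>2) * obs_energy T C \<tau> u"
    using obs_homog[OF u(1), of \<tau> "norm x"] xu by simp
  ultimately show ?thesis by (simp add: mult.commute)
qed

lemma m_le_obs:
  assumes x: "x \<in> D"
  shows "m_sq T C D \<tau> * ennreal ((norm x)\<^sup>2) \<le> obs_energy T C \<tau> x"
proof (cases "x = 0")
  case True then show ?thesis by (simp add: obs_zero)
next
  case False
  define u where "u = (1 / norm x) *\<^sub>R x"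
  have u: "u \<in> D" "norm u = 1" using False D_scale[OF x] by (auto simp: u_def)
  have xu: "x = norm x *\<^sub>R u" using False by (simp add: u_def)
  have "m_sq T C D \<tau> \<le> obs_energy T C \<tau> u" unfolding m_sq_def by (rule INF_lower) (use u in auto)
  then have "ennreal ((norm x)\<^sup>2) * m_sq T C D \<tau> \<le> ennreal ((norm x)\<^sup>2) * obs_energy T C \<tau> u"
    by (rule mult_left_mono) simp
  moreover have "obs_energy T C \<tau> x = ennreal ((norm x)\<^sup>2) * obs_energy T C \<tau> u"
    using obs_homog[OF u(1), of \<tau> "norm x"] xu by simp
  ultimately show ?thesis by (simp add: mult.commute)
qed

lemma obs_mono: "\<tau>1 \<le> \<tau>2 \<Longrightarrow> obs_energy T C \<tau>1 x \<le> obs_energy T C \<tau>2 x"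
  unfolding obs_energy_def
  by (rule nn_integral_mono) (auto simp: indicator_def intro: less_le_trans)

lemma M_mono: "\<tau>1 \<le> \<tau>2 \<Longrightarrow> M_sq T C D \<tau>1 \<le> M_sq T C D \<tau>2"
  unfolding M_sq_def by (rule SUP_mono) (auto intro: obs_mono)

lemma bounded_below_D_unit:
  assumes eta: "0 < \<eta>" "ereal \<eta> < \<tau>" and adm: "M_sq T C D \<tau> < top"
    and lt: "M_sq T C D (ereal \<eta>) < m_sq T C D \<tau>"
    and u: "u \<in> D" "norm u = 1"
  shows "\<exists>c>0. \<forall>x\<in>D. norm x = 1 \<longrightarrow> c \<le> norm (T \<eta> x)"
proof -
  have "m_sq T C D \<tau> \<le> obs_energy T C \<tau> u" using m_le_obs[OF u(1), of \<tau>] u by simp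
  also have "\<dots> \<le> M_sq T C D \<tau>" using obs_le_M[OF u(1), of \<tau>] u by simp
  finally have mfin: "m_sq T C D \<tau> < top" using adm by simp
  obtain a where a: "a \<ge> 0" "M_sq T C D (ereal \<eta>) = ennreal a"
    using lt mfin by (cases "M_sq T C D (ereal \<eta>)" rule: ennreal_cases) auto
  obtain b where b: "b \<ge> 0" "m_sq T C D \<tau> = ennreal b"
    using mfin by (cases "m_sq T C D \<tau>" rule: ennreal_cases) auto
  obtain cM where cM: "cM \<ge> 0" "M_sq T C D \<tau> = ennreal cM"
    using adm by (cases "M_sq T C D \<tau>" rule: ennreal_cases) auto
  have ab: "a < b" using lt a b by (simp add: ennreal_less_iff)
  have key: "b - a \<le> cM * (norm (T \<eta> x))\<^sup>2" if x: "x \<in> D" "norm x = 1" for x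
  proof -
    have Tx: "T \<eta> x \<in> D" using D_T x eta by simp
    have "ennreal b \<le> obs_energy T C \<tau> x" using m_le_obs[OF x(1), of \<tau>] x b by simp
    also have "\<dots> = obs_energy T C (ereal \<eta>) x + obs_energy T C (\<tau> - ereal \<eta>) (T \<eta> x)"
      by (rule obs_split[OF x(1) eta])
    also have "\<dots> \<le> ennreal a + ennreal cM * ennreal ((norm (T \<eta> x))\<^sup>2)"
    proof (rule add_mono)
      show "obs_energy T C (ereal \<eta>) x \<le> ennreal a" using obs_le_M[OF x(1), of "ereal \<eta>"] x a by simp
      have "obs_energy T C (\<tau> - ereal \<eta>) (T \<eta> x) \<le> M_sq T C D (\<tau> - ereal \<eta>) * ennreal ((norm (T \<eta> x))\<^sup>2)"
        by (rule obs_le_M[OF Tx])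
      also have "\<dots> \<le> M_sq T C D \<tau> * ennreal ((norm (T \<eta> x))\<^sup>2)"
      proof (rule mult_right_mono[OF M_mono])
        show "\<tau> - ereal \<eta> \<le> \<tau>" using eta by (cases \<tau>) auto
      qed simp
      finally show "obs_energy T C (\<tau> - ereal \<eta>) (T \<eta> x) \<le> ennreal cM * ennreal ((norm (T \<eta> x))\<^sup>2)"
        using cM by simp
    qed
    also have "\<dots> = ennreal (a + cM * (norm (T \<eta> x))\<^sup>2)"
      using a cM by (simp add: ennreal_mult ennreal_plus)
    finally have "b \<le> a + cM * (norm (T \<eta> x))\<^sup>2"
      using a cM by (subst (asm) ennreal_le_iff) auto
    then show ?thesis by simp
  qed
  have cMpos: "cM > 0"
  proof (rule ccontr)
    assume "\<not> cM > 0" then have "cM = 0" using cM by simp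
    then show False using key[OF u] ab by simp
  qed
  define c where "c = sqrt ((b - a) / cM)"
  have cpos: "c > 0" unfolding c_def using ab cMpos by simp
  have "c \<le> norm (T \<eta> x)" if x: "x \<in> D" "norm x = 1" for x
  proof -
    have "(b - a) / cM \<le> (norm (T \<eta> x))\<^sup>2" using key[OF x] cMpos by (simp add: divide_le_eq mult.commute)
    then have "c \<le> sqrt ((norm (T \<eta> x))\<^sup>2)" unfolding c_def by (rule real_sqrt_le_mono)
    then show ?thesis by simp
  qed
  then show ?thesis using cpos by blast
qed

lemma bounded_below_eta:
  assumes eta: "0 < \<eta>" "ereal \<eta> < \<tau>" and adm: "M_sq T C D \<tau> < top"
    and lt: "M_sq T C D (ereal \<eta>) < m_sq T C D \<tau>"
  shows "\<exists>c>0. \<forall>x. c * norm x \<le> norm (T \<eta> x)"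
proof -
  have "\<exists>c>0. \<forall>x\<in>D. c * norm x \<le> norm (T \<eta> x)"
  proof (cases "\<exists>u\<in>D. norm u = 1")
    case True
    then obtain u where u: "u \<in> D" "norm u = 1" by blast
    obtain c where c: "c > 0" "\<And>x. x \<in> D \<Longrightarrow> norm x = 1 \<Longrightarrow> c \<le> norm (T \<eta> x)"
      using bounded_below_D_unit[OF eta adm lt u] by blast
    have "c * norm x \<le> norm (T \<eta> x)" if x: "x \<in> D" for x
    proof (cases "x = 0")
      case True then show ?thesis by simp
    next
      case False
      define v where "v = (1 / norm x) *\<^sub>R x"
      have v: "v \<in> D" "norm v = 1" using False D_scale[OF x] by (auto simp: v_def)
      have "c \<le> norm (T \<eta> v)" by (rule c(2)[OF v])
      also have "norm (T \<eta> v) = norm (T \<eta> x) / norm x" by (simp add: v_def blinfun.scaleR_right)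
      finally show ?thesis using False by (simp add: field_simps)
    qed
    then show ?thesis using c by blast
  next
    case False
    have "x = 0" if "x \<in> D" for x
    proof (rule ccontr)
      assume "x \<noteq> 0"
      then have "(1 / norm x) *\<^sub>R x \<in> D \<and> norm ((1 / norm x) *\<^sub>R x) = 1" using D_scale[OF that] by simp
      then show False using False by blast
    qed
    then have "\<forall>x\<in>D. 1 * norm x \<le> norm (T \<eta> x)" by force
    then show ?thesis by (intro exI[of _ 1]) auto
  qed
  then obtain c where c: "c > 0" "\<And>x. x \<in> D \<Longrightarrow> c * norm x \<le> norm (T \<eta> x)" by blast
  have cl: "closed {x. c * norm x \<le> norm (T \<eta> x)}"
    by (intro closed_Collect_le continuous_intros linear_continuous_on bounded_linear.linear blinfun.bounded_linear_right)
  have "closure D \<subseteq> {x. c * norm x \<le> norm (T \<eta> x)}"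
    by (rule closure_minimal) (use c cl in auto)
  then show ?thesis using gen_dense[OF sg gen] c(1) by blast
qed

end

definition good_graph :: "('x::real_normed_vector \<times> real) set \<Rightarrow> bool" where
 "good_graph F \<longleftrightarrow> (\<forall>x a b. (x,a)\<in>F \<longrightarrow> (x,b)\<in>F \<longrightarrow> a=b)
    \<and> (\<forall>x a y b. (x,a)\<in>F \<longrightarrow> (y,b)\<in>F \<longrightarrow> (x+y,a+b)\<in>F)
    \<and> (\<forall>x a c. (x,a)\<in>F \<longrightarrow> (c *\<^sub>R x, c*a)\<in>F) \<and> (\<forall>x a. (x,a)\<in>F \<longrightarrow> a \<le> norm x)"

lemma hb_extend_step:
  fixes F :: "('x::real_normed_vector \<times> real) set"
  assumes g: "good_graph F" and nz: "F \<noteq> {}" and y: "y \<notin> fst ` F"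
  shows "\<exists>F'. good_graph F' \<and> F \<subset> F'"
proof -
  have fnc: "\<And>x a b. (x,a)\<in>F \<Longrightarrow> (x,b)\<in>F \<Longrightarrow> a=b"
   and add: "\<And>x a z b. (x,a)\<in>F \<Longrightarrow> (z,b)\<in>F \<Longrightarrow> (x+z,a+b)\<in>F"
   and scl: "\<And>x a c. (x,a)\<in>F \<Longrightarrow> (c *\<^sub>R x, c*a)\<in>F"
   and dom: "\<And>x a. (x,a)\<in>F \<Longrightarrow> a \<le> norm x"
    using g unfolding good_graph_def by blast+
  define S where "S = {a - norm (x - y) | x a. (x,a)\<in>F}"
  have Sne: "S \<noteq> {}" using nz unfolding S_def by auto
  have Sbd: "s \<le> norm (z + y) - b" if sS: "s \<in> S" and zb: "(z,b)\<in>F" for s z b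
  proof -
    obtain x a where xa: "(x,a)\<in>F" "s = a - norm (x - y)" using sS unfolding S_def by blast
    have "a + b \<le> norm (x + z)" using dom[OF add[OF xa(1) zb]] .
    also have "\<dots> \<le> norm (x - y) + norm (z + y)"
      using norm_triangle_ineq[of "x - y" "z + y"] by simp
    finally show ?thesis using xa(2) by simp
  qed
  obtain z0 b0 where z0: "(z0,b0)\<in>F" using nz by auto
  have bdd: "bdd_above S" by (rule bdd_aboveI[of _ "norm (z0+y) - b0"]) (use Sbd z0 in auto)
  define c where "c = Sup S"
  have c_ge: "a - norm (x - y) \<le> c" if "(x,a)\<in>F" for x a
    unfolding c_def by (rule cSup_upper[OF _ bdd]) (use that S_def in auto)
  have c_le: "c \<le> norm (z + y) - b" if "(z,b)\<in>F" for z b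
    unfolding c_def by (rule cSup_least[OF Sne]) (use Sbd that in auto)
  define F' where "F' = {(x + t *\<^sub>R y, a + t*c) | x a t. (x,a)\<in>F}"
  have yF: "y \<notin> fst ` F" by fact
  have ydom: "\<And>x a t. (x,a)\<in>F \<Longrightarrow> t \<noteq> 0 \<Longrightarrow> x + t *\<^sub>R y \<in> fst ` F \<Longrightarrow> False"
  proof -
    fix x a t assume xa: "(x,a)\<in>F" and t: "t \<noteq> 0" and m: "x + t *\<^sub>R y \<in> fst ` F"
    then obtain b where b: "(x + t *\<^sub>R y, b) \<in> F" by force
    have "((-1) *\<^sub>R x, (-1) * a) \<in> F" by (rule scl[OF xa])
    from add[OF b this] have "(t *\<^sub>R y, b - a) \<in> F" by simp
    from scl[OF this, of "1/t"] have "(y, (1/t) * (b - a)) \<in> F" using t by simp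
    then show False using yF by force
  qed
  have good': "good_graph F'"
    unfolding good_graph_def
  proof (intro conjI allI impI)
    fix w p q assume "(w,p)\<in>F'" "(w,q)\<in>F'"
    then obtain x a t x' a' t' where A: "(x,a)\<in>F" "w = x + t *\<^sub>R y" "p = a + t*c"
      and B: "(x',a')\<in>F" "w = x' + t' *\<^sub>R y" "q = a' + t'*c" unfolding F'_def by blast
    have "((-1) *\<^sub>R x', (-1) * a') \<in> F" by (rule scl[OF B(1)])
    from add[OF A(1) this] have C: "(x - x', a - a') \<in> F" by simp
    have eq: "x - x' + (t - t') *\<^sub>R y = 0" using A(2) B(2) by (simp add: algebra_simps)
    show "p = q"
    proof (cases "t = t'")
      case True
      then have "x = x'" using eq by simp
      then show ?thesis using fnc[OF A(1)] B True A by simp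
    next
      case False
      have "(x - x') + (t - t') *\<^sub>R y \<in> fst ` F" proof -
        have "(0::'x, 0::real) \<in> F" using scl[OF C, of 0] by simp
        then show ?thesis using eq by force
      qed
      with ydom[OF C, of "t - t'"] False show ?thesis by simp
    qed
  next
    fix w p v q assume "(w,p)\<in>F'" "(v,q)\<in>F'"
    then obtain x a t x' a' t' where A: "(x,a)\<in>F" "w = x + t *\<^sub>R y" "p = a + t*c"
      and B: "(x',a')\<in>F" "v = x' + t' *\<^sub>R y" "q = a' + t'*c" unfolding F'_def by blast
    show "(w + v, p + q) \<in> F'" unfolding F'_def
      by (rule CollectI, rule exI[of _ "x + x'"], rule exI[of _ "a + a'"], rule exI[of _ "t + t'"])
         (use A B add[OF A(1) B(1)] in \<open>simp add: algebra_simps\<close>)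
  next
    fix w p r assume "(w,p)\<in>F'"
    then obtain x a t where A: "(x,a)\<in>F" "w = x + t *\<^sub>R y" "p = a + t*c" unfolding F'_def by blast
    show "(r *\<^sub>R w, r * p) \<in> F'" unfolding F'_def
      by (rule CollectI, rule exI[of _ "r *\<^sub>R x"], rule exI[of _ "r * a"], rule exI[of _ "r * t"])
         (use A scl[OF A(1), of r] in \<open>simp add: algebra_simps\<close>)
  next
    fix w p assume "(w,p)\<in>F'"
    then obtain x a t where A: "(x,a)\<in>F" "w = x + t *\<^sub>R y" "p = a + t*c" unfolding F'_def by blast
    show "p \<le> norm w"
    proof (cases t "0::real" rule: linorder_cases)
      case equal then show ?thesis using A dom by simp
    next
      case greater
      have "c \<le> norm ((1/t) *\<^sub>R x + y) - (1/t) * a" using c_le[OF scl[OF A(1)]] .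
      then have "t * c \<le> t * (norm ((1/t) *\<^sub>R x + y) - (1/t) * a)"
        using greater by (simp add: mult_left_mono)
      also have "\<dots> = norm (t *\<^sub>R ((1/t) *\<^sub>R x + y)) - a" using greater
        by (simp add: right_diff_distrib)
      also have "t *\<^sub>R ((1/t) *\<^sub>R x + y) = x + t *\<^sub>R y" using greater
        by (simp add: scaleR_add_right)
      finally show ?thesis using A by simp
    next
      case less
      define s where "s = -t"
      have s: "s > 0" using less s_def by simp
      define N where "N = norm ((1/s) *\<^sub>R x - y)"
      have e: "x + t *\<^sub>R y = s *\<^sub>R ((1/s) *\<^sub>R x - y)" using s s_def by (simp add: algebra_simps)
      have n: "norm (x + t *\<^sub>R y) = s * N" unfolding e N_def using s by simp
      have "(1/s) * a - N \<le> c" using c_ge[OF scl[OF A(1)]] unfolding N_def .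
      then have "s * ((1/s) * a - N) \<le> s * c"
        using s by (simp add: mult_left_mono)
      moreover have "s * ((1/s) * a - N) = a - s * N"
        using s by (simp add: field_simps)
      ultimately show ?thesis using A s_def n by simp
    qed
  qed
  have sub: "F \<subseteq> F'" unfolding F'_def by force
  have "(y, c) \<in> F'"
  proof -
    have "(0::'x, 0::real) \<in> F" using scl[OF z0, of 0] by simp
    then show ?thesis unfolding F'_def by (rule_tac CollectI, rule_tac x=0 in exI, rule_tac x=0 in exI, rule_tac x=1 in exI) auto
  qed
  then have "F \<noteq> F'" using yF by force
  then show ?thesis using good' sub by blast
qed

lemma hb_max:
  fixes F0 :: "('x::real_normed_vector \<times> real) set"
  assumes g0: "good_graph F0" and ne: "F0 \<noteq> {}"
  shows "\<exists>F. good_graph F \<and> F0 \<subseteq> F \<and> fst ` F = UNIV"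
proof -
  define \<A> where "\<A> = {F. good_graph F \<and> F0 \<subseteq> F}"
  have "\<forall>C\<in>chains \<A>. \<exists>U\<in>\<A>. \<forall>X\<in>C. X \<subseteq> U"
  proof
    fix C assume C: "C \<in> chains \<A>"
    then have CA: "C \<subseteq> \<A>" and ch: "\<And>X Y. X \<in> C \<Longrightarrow> Y \<in> C \<Longrightarrow> X \<subseteq> Y \<or> Y \<subseteq> X"
      unfolding chains_def chain_subset_def by auto
    show "\<exists>U\<in>\<A>. \<forall>X\<in>C. X \<subseteq> U"
    proof (cases "C = {}")
      case True then show ?thesis using g0 \<A>_def by auto
    next
      case False
      have gC: "good_graph X" if "X \<in> C" for X using CA that \<A>_def by auto
      have two: "\<exists>Z\<in>C. p \<in> Z \<and> q \<in> Z" if pC: "p \<in> \<Union>C" and qC: "q \<in> \<Union>C" for p q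
      proof -
        obtain X Y where "X\<in>C" "Y\<in>C" "p\<in>X" "q\<in>Y" using pC qC by auto
        then show ?thesis using ch[of X Y] by blast
      qed
      have "good_graph (\<Union>C)"
        unfolding good_graph_def
      proof (intro conjI allI impI)
        fix x a b assume "(x,a)\<in>\<Union>C" "(x,b)\<in>\<Union>C"
        then obtain Z where "Z\<in>C" "(x,a)\<in>Z" "(x,b)\<in>Z" using two by blast
        then show "a = b" using gC[of Z] unfolding good_graph_def by blast
      next
        fix x a y b assume "(x,a)\<in>\<Union>C" "(y,b)\<in>\<Union>C"
        then obtain Z where "Z\<in>C" "(x,a)\<in>Z" "(y,b)\<in>Z" using two by blast
        then show "(x+y,a+b)\<in>\<Union>C" using gC[of Z] unfolding good_graph_def by blast
      next
        fix x a c assume "(x,a)\<in>\<Union>C"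
        then obtain Z where "Z\<in>C" "(x,a)\<in>Z" by blast
        then show "(c *\<^sub>R x, c*a)\<in>\<Union>C" using gC[of Z] unfolding good_graph_def by blast
      next
        fix x a assume "(x,a)\<in>\<Union>C"
        then obtain Z where "Z\<in>C" "(x,a)\<in>Z" by blast
        then show "a \<le> norm x" using gC[of Z] unfolding good_graph_def by blast
      qed
      moreover have "F0 \<subseteq> \<Union>C" using False CA \<A>_def by auto
      ultimately show ?thesis unfolding \<A>_def by blast
    qed
  qed
  from Zorn_Lemma2[OF this] obtain F where F: "F \<in> \<A>" and mx: "\<And>X. X \<in> \<A> \<Longrightarrow> F \<subseteq> X \<Longrightarrow> X = F"
    by blast
  have gF: "good_graph F" and F0F: "F0 \<subseteq> F" using F \<A>_def by auto
  have "fst ` F = UNIV"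
  proof (rule ccontr)
    assume "fst ` F \<noteq> UNIV"
    then obtain y where y: "y \<notin> fst ` F" by auto
    from hb_extend_step[OF gF _ y] ne F0F obtain F' where "good_graph F'" "F \<subset> F'" by blast
    with mx[of F'] F0F \<A>_def show False by auto
  qed
  with gF F0F show ?thesis by blast
qed

lemma separating_functional:
  fixes M :: "'x::real_normed_vector set"
  assumes cl: "closed M" and z: "0 \<in> M" and ad: "\<And>x y. x \<in> M \<Longrightarrow> y \<in> M \<Longrightarrow> x + y \<in> M"
    and sc: "\<And>c x. x \<in> M \<Longrightarrow> c *\<^sub>R x \<in> M" and x0: "x0 \<notin> M"
  shows "\<exists>\<phi>::'x \<Rightarrow>\<^sub>L real. \<phi> x0 \<noteq> 0 \<and> (\<forall>m\<in>M. \<phi> m = 0)"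
proof -
  define d where "d = infdist x0 M"
  have dpos: "d > 0"
    using in_closed_iff_infdist_zero[OF cl, of x0] z x0 infdist_nonneg[of x0 M] d_def by fastforce
  define F0 where "F0 = {(m + s *\<^sub>R x0, s * d) | m s. m \<in> M}"
  have g0: "good_graph F0" unfolding good_graph_def
  proof (intro conjI allI impI)
    fix w p q assume "(w,p)\<in>F0" "(w,q)\<in>F0"
    then obtain m s m' s' where A: "m\<in>M" "w = m + s *\<^sub>R x0" "p = s * d"
      and B: "m'\<in>M" "w = m' + s' *\<^sub>R x0" "q = s' * d" unfolding F0_def by blast
    have "s = s'"
    proof (rule ccontr)
      assume ne: "s \<noteq> s'"
      have e: "(s - s') *\<^sub>R x0 = m' + (-1) *\<^sub>R m" using A(2) B(2) by (simp add: algebra_simps)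
      have "x0 = (1/(s - s')) *\<^sub>R ((s - s') *\<^sub>R x0)" using ne by simp
      then have "x0 = (1/(s - s')) *\<^sub>R (m' + (-1) *\<^sub>R m)" using e by simp
      moreover have "(1/(s - s')) *\<^sub>R (m' + (-1) *\<^sub>R m) \<in> M" using A B ad sc by blast
      ultimately show False using x0 by simp
    qed
    then show "p = q" using A B by simp
  next
    fix w p v q assume "(w,p)\<in>F0" "(v,q)\<in>F0"
    then obtain m s m' s' where A: "m\<in>M" "w = m + s *\<^sub>R x0" "p = s * d"
      and B: "m'\<in>M" "v = m' + s' *\<^sub>R x0" "q = s' * d" unfolding F0_def by blast
    show "(w + v, p + q) \<in> F0" unfolding F0_def
      by (rule CollectI, rule exI[of _ "m + m'"], rule exI[of _ "s + s'"])
         (use A B ad in \<open>simp add: algebra_simps\<close>)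
  next
    fix w p c assume "(w,p)\<in>F0"
    then obtain m s where A: "m\<in>M" "w = m + s *\<^sub>R x0" "p = s * d" unfolding F0_def by blast
    show "(c *\<^sub>R w, c * p) \<in> F0" unfolding F0_def
      by (rule CollectI, rule exI[of _ "c *\<^sub>R m"], rule exI[of _ "c * s"])
         (use A sc in \<open>simp add: algebra_simps\<close>)
  next
    fix w p assume "(w,p)\<in>F0"
    then obtain m s where A: "m\<in>M" "w = m + s *\<^sub>R x0" "p = s * d" unfolding F0_def by blast
    show "p \<le> norm w"
    proof (cases "s = 0")
      case True then show ?thesis using A by simp
    next
      case False
      have mm: "(- (1/s)) *\<^sub>R m \<in> M" using sc A by blast
      have "d \<le> dist x0 ((- (1/s)) *\<^sub>R m)" unfolding d_def by (rule infdist_le[OF mm])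
      also have "dist x0 ((- (1/s)) *\<^sub>R m) = norm ((1/s) *\<^sub>R w)"
        using A False by (simp add: dist_norm algebra_simps)
      also have "\<dots> = norm w / \<bar>s\<bar>" by simp
      finally have "\<bar>s\<bar> * d \<le> norm w" using False by (simp add: field_simps)
      moreover have "s * d \<le> \<bar>s\<bar> * d" using dpos by (simp add: mult_right_mono)
      ultimately show ?thesis using A by simp
    qed
  qed
  have ne: "F0 \<noteq> {}" unfolding F0_def using z by blast
  obtain F where gF: "good_graph F" and F0F: "F0 \<subseteq> F" and all: "fst ` F = UNIV"
    using hb_max[OF g0 ne] by blast
  have fnc: "\<And>x a b. (x,a)\<in>F \<Longrightarrow> (x,b)\<in>F \<Longrightarrow> a=b"
   and add: "\<And>x a z b. (x,a)\<in>F \<Longrightarrow> (z,b)\<in>F \<Longrightarrow> (x+z,a+b)\<in>F"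
   and scl: "\<And>x a c. (x,a)\<in>F \<Longrightarrow> (c *\<^sub>R x, c*a)\<in>F"
   and dom: "\<And>x a. (x,a)\<in>F \<Longrightarrow> a \<le> norm x"
    using gF unfolding good_graph_def by blast+
  define f where "f x = (THE a. (x,a)\<in>F)" for x
  have fin: "(x, f x) \<in> F" for x
  proof -
    have "x \<in> fst ` F" using all by simp
    then obtain a where xa: "(x,a)\<in>F" by force
    have "\<exists>!a. (x,a)\<in>F" using xa fnc by blast
    then show ?thesis unfolding f_def by (rule theI')
  qed
  have fe: "(x,a)\<in>F \<Longrightarrow> f x = a" for x a using fnc fin by blast
  have lin_add: "f (x + y) = f x + f y" for x y using fe[OF add[OF fin fin]] .
  have lin_sc: "f (c *\<^sub>R x) = c *\<^sub>R f x" for c x using fe[OF scl[OF fin]] by simp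
  have bnd: "norm (f x) \<le> norm x * 1" for x
  proof -
    have "f x \<le> norm x" using dom[OF fin] .
    moreover have "- f x \<le> norm x" using lin_sc[of "-1" x] dom[OF fin, of "(-1) *\<^sub>R x"] by simp
    ultimately show ?thesis by simp
  qed
  have bl: "bounded_linear f" by (rule bounded_linear_intro[OF lin_add lin_sc bnd])
  have fx0: "f x0 = d"
  proof -
    have "(0 + 1 *\<^sub>R x0, 1 * d) \<in> F0" unfolding F0_def using z by blast
    then show ?thesis using F0F fe by auto
  qed
  have fm: "f m = 0" if "m \<in> M" for m
  proof -
    have "(m + 0 *\<^sub>R x0, 0 * d) \<in> F0" unfolding F0_def using that by blast
    then show ?thesis using F0F fe by auto
  qed
  show ?thesis
    by (rule exI[of _ "Blinfun f"]) (use dpos in \<open>simp add: bounded_linear_Blinfun_apply[OF bl] fx0 fm\<close>)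
qed

lemma closed_range_bb:
  fixes L :: "'x::banach \<Rightarrow>\<^sub>L 'x"
  assumes c: "c > 0" and bb: "\<And>x. c * norm x \<le> norm (L x)"
  shows "closed (range (blinfun_apply L))"
  unfolding closed_sequential_limits
proof (intro allI impI)
  fix y l assume H: "(\<forall>n. y n \<in> range (blinfun_apply L)) \<and> y \<longlonglongrightarrow> l"
  then have "\<forall>n. \<exists>z. y n = L z" by blast
  then obtain x where x: "\<And>n. y n = L (x n)" by metis
  have "Cauchy y" using H LIMSEQ_imp_Cauchy by blast
  have "Cauchy x"
  proof (rule metric_CauchyI)
    fix e :: real assume e: "e > 0"
    obtain M where M: "\<And>m n. m \<ge> M \<Longrightarrow> n \<ge> M \<Longrightarrow> dist (y m) (y n) < c * e"
      using metric_CauchyD[OF \<open>Cauchy y\<close>, of "c * e"] c e by auto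
    show "\<exists>M. \<forall>m\<ge>M. \<forall>n\<ge>M. dist (x m) (x n) < e"
    proof (intro exI allI impI)
      fix m n assume mn: "m \<ge> M" "n \<ge> M"
      have "c * norm (x m - x n) \<le> norm (L (x m - x n))" by (rule bb)
      also have "\<dots> = dist (y m) (y n)" by (simp add: x dist_norm blinfun.diff_right)
      also have "\<dots> < c * e" using M mn by blast
      finally show "dist (x m) (x n) < e" using c by (simp add: dist_norm)
    qed
  qed
  then obtain z where z: "x \<longlonglongrightarrow> z" using Cauchy_convergent_iff convergent_def by blast
  have "(\<lambda>n. L (x n)) \<longlonglongrightarrow> L z" by (rule blinfun.tendsto[OF tendsto_const z])
  moreover have "y = (\<lambda>n. L (x n))" by (rule ext) (simp add: x)
  ultimately have "y \<longlonglongrightarrow> L z" by simp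
  then have "l = L z" using H LIMSEQ_unique by blast
  then show "l \<in> range (blinfun_apply L)" by simp
qed

lemma range_blinfun_subspace:
  fixes L :: "'x::real_normed_vector \<Rightarrow>\<^sub>L 'y::real_normed_vector"
  shows "0 \<in> range (blinfun_apply L)"
    "\<And>a b. a \<in> range (blinfun_apply L) \<Longrightarrow> b \<in> range (blinfun_apply L) \<Longrightarrow> a + b \<in> range (blinfun_apply L)"
    "\<And>c a. a \<in> range (blinfun_apply L) \<Longrightarrow> c *\<^sub>R a \<in> range (blinfun_apply L)"
proof -
  show "0 \<in> range (blinfun_apply L)" by (metis blinfun.zero_right rangeI)
  show "a + b \<in> range (blinfun_apply L)" if ha: "a \<in> range (blinfun_apply L)" and hb: "b \<in> range (blinfun_apply L)" for a b
  proof -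
    obtain u v where "a = L u" "b = L v" using ha hb by blast
    then have "a + b = L (u + v)" by (simp add: blinfun.add_right)
    then show ?thesis by simp
  qed
  show "c *\<^sub>R a \<in> range (blinfun_apply L)" if ha: "a \<in> range (blinfun_apply L)" for c a
  proof -
    obtain u where "a = L u" using ha by blast
    then have "c *\<^sub>R a = L (c *\<^sub>R u)" by (simp add: blinfun.scaleR_right)
    then show ?thesis by simp
  qed
qed

lemma adj_inj_surj:
  fixes L K :: "'x::banach \<Rightarrow>\<^sub>L 'x"
  assumes c: "c > 0" and bb: "\<And>x. c * norm x \<le> norm (L x)"
    and sub: "range (blinfun_apply K) \<subseteq> range (blinfun_apply L)"
    and adj: "adjoint_injective K"
  shows "surj (blinfun_apply L)"
proof (rule ccontr)
  assume "\<not> surj (blinfun_apply L)"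
  then obtain x0 where x0: "x0 \<notin> range (blinfun_apply L)" by blast
  obtain \<phi> :: "'x \<Rightarrow>\<^sub>L real" where \<phi>: "\<phi> x0 \<noteq> 0" "\<forall>m\<in>range (blinfun_apply L). \<phi> m = 0"
    using separating_functional[OF closed_range_bb[OF c bb] range_blinfun_subspace x0] by blast
  have "\<phi> o\<^sub>L K = 0"
  proof (rule blinfun_eqI)
    fix i
    have "K i \<in> range (blinfun_apply L)" using sub by blast
    then obtain m where "K i = L m" by blast
    then show "(\<phi> o\<^sub>L K) i = (0::'x \<Rightarrow>\<^sub>L real) i" using \<phi>(2) by simp
  qed
  then have "\<phi> = 0" using adj unfolding adjoint_injective_def by blast
  then show False using \<phi>(1) by simp
qed

lemma blinfun_inverse:
  fixes L :: "'x::banach \<Rightarrow>\<^sub>L 'x"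
  assumes k: "k > 0" and bb: "\<And>x. k * norm x \<le> norm (L x)" and su: "surj (blinfun_apply L)"
  shows "\<exists>R :: 'x \<Rightarrow>\<^sub>L 'x. (\<forall>y. L (R y) = y) \<and> (\<forall>x. R (L x) = x)"
proof -
  have inj: "inj (blinfun_apply L)"
  proof (rule injI)
    fix x y assume "L x = L y"
    then have "L (x - y) = 0" by (simp add: blinfun.diff_right)
    then have "k * norm (x - y) \<le> 0" using bb[of "x - y"] by simp
    then show "x = y" using k by (simp add: mult_le_0_iff)
  qed
  define f where "f = inv (blinfun_apply L)"
  have Lf: "L (f y) = y" for y unfolding f_def by (rule surj_f_inv_f[OF su])
  have fL: "f (L x) = x" for x unfolding f_def by (rule inv_f_f[OF inj])
  have fadd: "f (x + y) = f x + f y" for x y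
  proof -
    have "L (f x + f y) = x + y" by (simp add: blinfun.add_right Lf)
    then have "f (x + y) = f (L (f x + f y))" by simp
    then show ?thesis by (simp add: fL)
  qed
  have fsc: "f (r *\<^sub>R x) = r *\<^sub>R f x" for r x
  proof -
    have "L (r *\<^sub>R f x) = r *\<^sub>R x" by (simp add: blinfun.scaleR_right Lf)
    then have "f (r *\<^sub>R x) = f (L (r *\<^sub>R f x))" by simp
    then show ?thesis by (simp add: fL)
  qed
  have fb: "norm (f x) \<le> norm x * (1/k)" for x
  proof -
    have "k * norm (f x) \<le> norm x" using bb[of "f x"] by (simp add: Lf)
    then show ?thesis using k by (simp add: field_simps)
  qed
  have bl: "bounded_linear f" by (rule bounded_linear_intro[OF fadd fsc fb])
  show ?thesis
    by (rule exI[of _ "Blinfun f"]) (simp add: bounded_linear_Blinfun_apply[OF bl] Lf fL)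
qed

lemma group_from:
  fixes T :: "real \<Rightarrow> ('x::banach \<Rightarrow>\<^sub>L 'x)"
  assumes sg: "c0_semigroup T" and s: "s > 0" and c: "c > 0"
    and bb: "\<And>x. c * norm x \<le> norm (T s x)" and su: "surj (blinfun_apply (T s))"
  shows "extends_to_group T"
proof -
  have Tadd: "T (a + b) x = T a (T b x)" if "0 \<le> a" "0 \<le> b" for a b x
    using sgadd[OF sg that] by simp
  have Tn: "surj (blinfun_apply (T (real n * s))) \<and> (\<forall>x. c ^ n * norm x \<le> norm (T (real n * s) x))" for n
  proof (induction n)
    case 0
    then show ?case using sg0[OF sg] by simp
  next
    case (Suc n)
    have eq: "T (real (Suc n) * s) x = T s (T (real n * s) x)" for x
      using Tadd[of s "real n * s" x] s by (simp add: algebra_simps)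
    have "surj (blinfun_apply (T (real (Suc n) * s)))"
    proof -
      have "y \<in> range (blinfun_apply (T (real (Suc n) * s)))" for y
      proof -
        obtain z where "T s z = y" using su by (metis surjD)
        moreover obtain w where "T (real n * s) w = z" using Suc.IH by (metis surjD)
        ultimately show ?thesis using eq by (metis rangeI)
      qed
      then show ?thesis by blast
    qed
    moreover have "c ^ Suc n * norm x \<le> norm (T (real (Suc n) * s) x)" for x
    proof -
      have "c ^ Suc n * norm x = c * (c ^ n * norm x)" by simp
      also have "\<dots> \<le> c * norm (T (real n * s) x)" using Suc.IH c by (simp add: mult_left_mono)
      also have "\<dots> \<le> norm (T s (T (real n * s) x))" by (rule bb)
      finally show ?thesis using eq by simp
    qed
    ultimately show ?case by blast
  qed
  have bij: "\<exists>k>0. (\<forall>x. k * norm x \<le> norm (T t x)) \<and> surj (blinfun_apply (T t))" if t: "0 \<le> t" for t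
  proof -
    obtain n :: nat where "t / s \<le> real n" using real_arch_simple by blast
    then have tn: "t \<le> real n * s" using s by (simp add: field_simps)
    have e1: "T (real n * s) x = T (real n * s - t) (T t x)" for x using Tadd[of "real n * s - t" t x] tn t by simp
    have e2: "T (real n * s) x = T t (T (real n * s - t) x)" for x using Tadd[of t "real n * s - t" x] tn t by simp
    define N where "N = norm (T (real n * s - t))"
    define k where "k = c ^ n / (N + 1)"
    have N1: "N + 1 > 0" unfolding N_def by (smt (verit) norm_ge_zero)
    have k: "k > 0" unfolding k_def using c N1 by simp
    have "k * norm x \<le> norm (T t x)" for x
    proof -
      have "c ^ n * norm x \<le> norm (T (real n * s - t) (T t x))" using Tn e1 by metis
      also have "\<dots> \<le> N * norm (T t x)" unfolding N_def by (rule norm_blinfun)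
      also have "\<dots> \<le> (N + 1) * norm (T t x)" by (simp add: mult_right_mono)
      finally show ?thesis unfolding k_def using N_def by (simp add: field_simps add_pos_nonneg)
    qed
    moreover have "surj (blinfun_apply (T t))"
    proof -
      have "y \<in> range (blinfun_apply (T t))" for y
      proof -
        obtain z where "T (real n * s) z = y" using Tn by (metis surjD)
        then show ?thesis using e2 by (metis rangeI)
      qed
      then show ?thesis by blast
    qed
    ultimately show ?thesis using k by blast
  qed
  have "\<forall>t. \<exists>Rt :: 'x \<Rightarrow>\<^sub>L 'x. 0 \<le> t \<longrightarrow> (\<forall>y. T t (Rt y) = y) \<and> (\<forall>x. Rt (T t x) = x)"
  proof
    fix t :: real
    show "\<exists>Rt :: 'x \<Rightarrow>\<^sub>L 'x. 0 \<le> t \<longrightarrow> (\<forall>y. T t (Rt y) = y) \<and> (\<forall>x. Rt (T t x) = x)"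
    proof (cases "0 \<le> t")
      case True
      then obtain k where "k > 0" "\<And>x. k * norm x \<le> norm (T t x)" "surj (blinfun_apply (T t))"
        using bij by blast
      then show ?thesis using blinfun_inverse[of k "T t"] by blast
    qed simp
  qed
  then obtain R :: "real \<Rightarrow> ('x \<Rightarrow>\<^sub>L 'x)" where
    R: "\<And>t. 0 \<le> t \<Longrightarrow> (\<forall>y. T t (R t y) = y) \<and> (\<forall>x. R t (T t x) = x)" by metis
  have TR: "T t (R t y) = y" if "0 \<le> t" for t y using R that by blast
  have RI: "R w y = z" if "0 \<le> w" "T w z = y" for w y z using R that by blast
  define S where "S t = (if 0 \<le> t then T t else R (- t))" for t
  have "S (a + b) = S a o\<^sub>L S b" for a b
  proof (rule blinfun_eqI)
    fix y
    show "S (a + b) y = (S a o\<^sub>L S b) y"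
    proof (cases "0 \<le> a"; cases "0 \<le> b"; cases "0 \<le> a + b")
      assume "0 \<le> a" "0 \<le> b" then show ?thesis by (simp add: S_def Tadd)
    next
      assume "0 \<le> a" "0 \<le> b" "\<not> 0 \<le> a + b" then show ?thesis by simp
    next
      assume h: "0 \<le> a" "\<not> 0 \<le> b" "0 \<le> a + b"
      have "T a (R (-b) y) = T (a + b) (T (-b) (R (-b) y))" using Tadd[of "a + b" "-b"] h by simp
      also have "\<dots> = T (a + b) y" using TR h by simp
      finally show ?thesis using h by (simp add: S_def)
    next
      assume h: "0 \<le> a" "\<not> 0 \<le> b" "\<not> 0 \<le> a + b"
      have "R (- (a + b)) y = T a (R (-b) y)"
      proof (rule RI)
        show "0 \<le> - (a + b)" using h by simp
        have "T (- (a + b)) (T a (R (-b) y)) = T (- (a + b) + a) (R (-b) y)" using Tadd[of "-(a+b)" a] h by simp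
        also have "\<dots> = y" using TR h by simp
        finally show "T (- (a + b)) (T a (R (- b) y)) = y" .
      qed
      then show ?thesis using h by (simp add: S_def)
    next
      assume h: "\<not> 0 \<le> a" "0 \<le> b" "0 \<le> a + b"
      have "R (-a) (T b y) = T (a + b) y"
      proof (rule RI)
        show "0 \<le> - a" using h by simp
        show "T (- a) (T (a + b) y) = T b y" using Tadd[of "-a" "a + b"] h by simp
      qed
      then show ?thesis using h by (simp add: S_def)
    next
      assume h: "\<not> 0 \<le> a" "0 \<le> b" "\<not> 0 \<le> a + b"
      have "R (-a) (T b y) = R (- (a + b)) y"
      proof (rule RI)
        show "0 \<le> - a" using h by simp
        have "T (- a) (R (- (a + b)) y) = T b (T (- (a + b)) (R (- (a + b)) y))"
          using Tadd[of b "-(a+b)"] h by simp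
        also have "\<dots> = T b y" using TR h by simp
        finally show "T (- a) (R (- (a + b)) y) = T b y" .
      qed
      then show ?thesis using h by (simp add: S_def)
    next
      assume "\<not> 0 \<le> a" "\<not> 0 \<le> b" "0 \<le> a + b" then show ?thesis by simp
    next
      assume h: "\<not> 0 \<le> a" "\<not> 0 \<le> b"
      then have h': "\<not> 0 \<le> a + b" by simp
      have "R (- (a + b)) y = R (-a) (R (-b) y)"
      proof (rule RI)
        show "0 \<le> - (a + b)" using h by simp
        have "T (- (a + b)) (R (-a) (R (-b) y)) = T (-b) (T (-a) (R (-a) (R (-b) y)))"
          using Tadd[of "-b" "-a"] h by (simp add: add.commute)
        also have "\<dots> = y" using TR h by simp
        finally show "T (- (a + b)) (R (-a) (R (-b) y)) = y" .
      qed
      then show ?thesis using h h' by (simp add: S_def)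
    qed
  qed
  moreover have "S 0 = id_blinfun" using sg0[OF sg] by (simp add: S_def)
  moreover have "\<forall>t\<ge>0. S t = T t" by (simp add: S_def)
  ultimately show ?thesis unfolding extends_to_group_def by blast
qed

lemma group_adj:
  fixes T :: "real \<Rightarrow> ('x::banach \<Rightarrow>\<^sub>L 'x)"
  assumes g: "extends_to_group T" and t: "t > 0"
  shows "adjoint_injective (T t)"
  unfolding adjoint_injective_def
proof (intro allI impI)
  fix \<phi> :: "'x \<Rightarrow>\<^sub>L real" assume z: "\<phi> o\<^sub>L T t = 0"
  obtain S where S: "S 0 = id_blinfun" "\<And>a b. S (a + b) = S a o\<^sub>L S b" "\<And>t. t \<ge> 0 \<Longrightarrow> S t = T t"
    using g unfolding extends_to_group_def by blast
  show "\<phi> = 0"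
  proof (rule blinfun_eqI)
    fix x
    have e: "id_blinfun = T t o\<^sub>L S (-t)" using S(2)[of t "-t"] S(1) S(3)[of t] t by simp
    have "x = T t (S (-t) x)" using arg_cong[OF e, of "\<lambda>L. blinfun_apply L x"] by simp
    then have "\<phi> x = (\<phi> o\<^sub>L T t) (S (-t) x)" by simp
    then show "\<phi> x = (0::'x \<Rightarrow>\<^sub>L real) x" using z by simp
  qed
qed

lemma bb_small:
  fixes T :: "real \<Rightarrow> ('x::banach \<Rightarrow>\<^sub>L 'x)"
  assumes sg: "c0_semigroup T" and c: "c > 0" and bb: "\<And>x. c * norm x \<le> norm (T \<eta> x)"
    and s: "0 \<le> s" "s \<le> \<eta>"
  shows "\<exists>k>0. \<forall>x. k * norm x \<le> norm (T s x)"
proof -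
  define N where "N = norm (T (\<eta> - s))"
  have N1: "N + 1 > 0" unfolding N_def by (smt (verit) norm_ge_zero)
  have "c / (N + 1) * norm x \<le> norm (T s x)" for x
  proof -
    have "T \<eta> x = T (\<eta> - s) (T s x)" using sgadd[OF sg, of "\<eta> - s" s] s by simp
    then have "c * norm x \<le> norm (T (\<eta> - s) (T s x))" using bb by metis
    also have "\<dots> \<le> N * norm (T s x)" unfolding N_def by (rule norm_blinfun)
    also have "\<dots> \<le> (N + 1) * norm (T s x)" by (simp add: mult_right_mono)
    finally show ?thesis using N1 by (simp add: field_simps)
  qed
  moreover have "c / (N + 1) > 0" using c N1 by simp
  ultimately show ?thesis by blast
qed

theorem lemma3p2:
  fixes T :: "real \<Rightarrow> ('x::banach \<Rightarrow>\<^sub>L 'x)"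
    and A :: "'x \<Rightarrow> 'x" and D :: "'x set"
    and C :: "'x \<Rightarrow> 'y::banach"
  assumes sg: "c0_semigroup T"
    and gen: "is_generator T D (\<lambda>x. - A x)"
    and C_add: "\<And>x y. x \<in> D \<Longrightarrow> y \<in> D \<Longrightarrow> C (x + y) = C x + C y"
    and C_scale: "\<And>c x. x \<in> D \<Longrightarrow> C (c *\<^sub>R x) = c *\<^sub>R C x"
    and C_bdd: "\<exists>K. \<forall>x\<in>D. norm (C x) \<le> K * (norm x + norm (A x))"
    and bfc: "BFC_system T C D"
  shows "((\<exists>t0>0. adjoint_injective (T t0)) \<longleftrightarrow> (\<forall>t>0. adjoint_injective (T t))) \<and>
         ((\<forall>t>0. adjoint_injective (T t)) \<longleftrightarrow> extends_to_group T)"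
proof -
  obtain \<eta> \<tau> where eta: "0 < \<eta>" "ereal \<eta> < \<tau>" and adm: "admissible_in T C D \<tau>"
    and lt: "M_sq T C D (ereal \<eta>) < m_sq T C D \<tau>"
    using bfc unfolding BFC_system_def by blast
  have adm': "M_sq T C D \<tau> < top" using adm unfolding admissible_in_def .
  obtain c where c: "c > 0" "\<And>x. c * norm x \<le> norm (T \<eta> x)"
    using bounded_below_eta[OF sg gen C_add C_scale C_bdd eta adm' lt] by blast
  have P1: "extends_to_group T" if t0: "t0 > 0" "adjoint_injective (T t0)" for t0
  proof -
    define s where "s = min t0 \<eta>"
    have s: "0 < s" "s \<le> \<eta>" "s \<le> t0" using t0 eta by (auto simp: s_def)
    obtain k where k: "k > 0" "\<And>x. k * norm x \<le> norm (T s x)"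
      using bb_small[OF sg c(1) c(2) _ s(2)] s(1) by auto
    have sub: "range (blinfun_apply (T t0)) \<subseteq> range (blinfun_apply (T s))"
    proof
      fix y assume "y \<in> range (blinfun_apply (T t0))"
      then obtain x where "y = T t0 x" by blast
      moreover have "T t0 x = T s (T (t0 - s) x)" using sgadd[OF sg, of s "t0 - s"] s by simp
      ultimately show "y \<in> range (blinfun_apply (T s))" by simp
    qed
    have su: "surj (blinfun_apply (T s))" by (rule adj_inj_surj[OF k sub t0(2)])
    show ?thesis by (rule group_from[OF sg s(1) k su])
  qed
  have P2: "\<forall>t>0. adjoint_injective (T t)" if "extends_to_group T"
    using group_adj[OF that] by blast
  show ?thesis
  proof (intro conjI iffI)
    assume "\<exists>t0>0. adjoint_injective (T t0)"
    then show "\<forall>t>0. adjoint_injective (T t)" using P1 P2 by blast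
  next
    assume "\<forall>t>0. adjoint_injective (T t)"
    then show "\<exists>t0>0. adjoint_injective (T t0)" by (metis zero_less_one)
  next
    assume "\<forall>t>0. adjoint_injective (T t)"
    then show "extends_to_group T" using P1 by (metis zero_less_one)
  next
    assume "extends_to_group T"
    then show "\<forall>t>0. adjoint_injective (T t)" by (rule P2)
  qed
qed

end
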